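(* Let $G=(S,C,H)$ be a spider graph (thin with $r\ge2$, or thick with $r\ge3$) and $T$ an MDNS of $G$. Then $|\widehat T\cap H|\le\tilde\gamma_{gr}^{\times2}(G[H])$ and $|\widehat T\cap(C\cup S)|\le\tilde\gamma_{gr}^{\times2}(G[C\cup S])$.
   Context: Graphs are finite, simple, undirected; $N[v]$ closed neighborhood. A sequence of distinct vertices $(v_1,\dots,v_k)$ is a double neighborhood sequence (DNS) if for each $i$ some $w\in N[v_i]$ satisfies $|\{j<i:w\in N[v_j]\}|\le1$; an MDNS is a DNS of maximum length and $\tilde\gamma_{gr}^{\times2}$ is that length ($0$ for the graph with no vertices). $\widehat T$ is the vertex set of $T$. A spider graph $G=(S,C,H)$ of weight $r$: $V(G)$ is partitioned into $S=\{s_1,\dots,s_r\}$ (stable), $C=\{c_1,\dots,c_r\}$ (clique), $H$ (possibly empty, arbitrary edges inside), all edges between $C$ and $H$, none between $H$ and $S$; thin: $s_ic_j\in E$ iff $i=j$; thick: $s_ic_j\in E$ iff $i\neq j$. *)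

theory Defs
  imports Main
begin

definition graph :: "'a set \<Rightarrow> ('a \<Rightarrow> 'a \<Rightarrow> bool) \<Rightarrow> bool" where
  "graph V E \<longleftrightarrow> finite V \<and> (\<forall>u v. E u v \<longrightarrow> E v u) \<and> (\<forall>v. \<not> E v v)
     \<and> (\<forall>u v. E u v \<longrightarrow> u \<in> V \<and> v \<in> V)"

definition cnbh :: "'a set \<Rightarrow> ('a \<Rightarrow> 'a \<Rightarrow> bool) \<Rightarrow> 'a \<Rightarrow> 'a set" where
  "cnbh V E v = insert v {u \<in> V. E v u}"

definition induced :: "('a \<Rightarrow> 'a \<Rightarrow> bool) \<Rightarrow> 'a set \<Rightarrow> 'a \<Rightarrow> 'a \<Rightarrow> bool" where
  "induced E X = (\<lambda>u v. E u v \<and> u \<in> X \<and> v \<in> X)"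

definition is_dns :: "'a set \<Rightarrow> ('a \<Rightarrow> 'a \<Rightarrow> bool) \<Rightarrow> 'a list \<Rightarrow> bool" where
  "is_dns V E T \<longleftrightarrow> distinct T \<and> set T \<subseteq> V \<and>
     (\<forall>i < length T. \<exists>w \<in> cnbh V E (T ! i).
        card {j. j < i \<and> w \<in> cnbh V E (T ! j)} \<le> 1)"

definition dgr :: "'a set \<Rightarrow> ('a \<Rightarrow> 'a \<Rightarrow> bool) \<Rightarrow> nat" where
  "dgr V E = Max (length ` {T. is_dns V E T})"

definition is_mdns :: "'a set \<Rightarrow> ('a \<Rightarrow> 'a \<Rightarrow> bool) \<Rightarrow> 'a list \<Rightarrow> bool" where
  "is_mdns V E T \<longleftrightarrow> is_dns V E T \<and> (\<forall>T'. is_dns V E T' \<longrightarrow> length T' \<le> length T)"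

definition spider_base :: "'a set \<Rightarrow> ('a \<Rightarrow> 'a \<Rightarrow> bool) \<Rightarrow> nat \<Rightarrow> (nat \<Rightarrow> 'a) \<Rightarrow> (nat \<Rightarrow> 'a) \<Rightarrow> 'a set \<Rightarrow> bool" where
  "spider_base V E r s c H \<longleftrightarrow>
     inj_on s {..<r} \<and> inj_on c {..<r} \<and>
     s ` {..<r} \<inter> c ` {..<r} = {} \<and> s ` {..<r} \<inter> H = {} \<and> c ` {..<r} \<inter> H = {} \<and>
     V = s ` {..<r} \<union> c ` {..<r} \<union> H \<and>
     (\<forall>i<r. \<forall>j<r. \<not> E (s i) (s j)) \<and>
     (\<forall>i<r. \<forall>j<r. i \<noteq> j \<longrightarrow> E (c i) (c j)) \<and>
     (\<forall>i<r. \<forall>h\<in>H. E (c i) h) \<and>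
     (\<forall>i<r. \<forall>h\<in>H. \<not> E (s i) h)"

definition thin_spider where
  "thin_spider V E r s c H \<longleftrightarrow> spider_base V E r s c H \<and>
     (\<forall>i<r. \<forall>j<r. E (s i) (c j) \<longleftrightarrow> i = j)"

definition thick_spider where
  "thick_spider V E r s c H \<longleftrightarrow> spider_base V E r s c H \<and>
     (\<forall>i<r. \<forall>j<r. E (s i) (c j) \<longleftrightarrow> i \<noteq> j)"

end

theory Submission
  imports Defs
begin

definition okd :: "'a set \<Rightarrow> ('a \<Rightarrow> 'a \<Rightarrow> bool) \<Rightarrow> 'a list \<Rightarrow> 'a \<Rightarrow> bool" where
  "okd V E xs v \<longleftrightarrow> (\<exists>w\<in>cnbh V E v. card {u\<in>set xs. w \<in> cnbh V E u} \<le> 1)"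

lemma card_idx:
  assumes "distinct T" "i \<le> length T"
  shows "card {j. j < i \<and> P (T ! j)} = card {u\<in>set (take i T). P u}"
proof -
  have inj: "inj_on (nth T) {j. j < i \<and> P (T ! j)}"
    using assms by (auto simp: inj_on_def nth_eq_iff_index_eq)
  have "nth T ` {j. j < i \<and> P (T ! j)} = {u\<in>set (take i T). P u}"
  proof (intro set_eqI iffI)
    fix u assume "u \<in> nth T ` {j. j < i \<and> P (T ! j)}"
    then obtain j where "j < i" "P (T!j)" "u = T!j" by auto
    then show "u \<in> {u\<in>set (take i T). P u}" using assms
      by (auto simp: in_set_conv_nth intro!: exI[of _ j])
  next
    fix u assume "u \<in> {u\<in>set (take i T). P u}"
    then obtain j where "j < length (take i T)" "take i T ! j = u" "P u"
      by (auto simp: in_set_conv_nth)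
    then show "u \<in> nth T ` {j. j < i \<and> P (T ! j)}" using assms by auto
  qed
  then show ?thesis using card_image[OF inj] by simp
qed

lemma dns_take:
  "is_dns V E T \<longleftrightarrow> distinct T \<and> set T \<subseteq> V \<and> (\<forall>i<length T. okd V E (take i T) (T!i))"
proof -
  have "\<And>i w. distinct T \<Longrightarrow> i < length T \<Longrightarrow>
     card {j. j < i \<and> w \<in> cnbh V E (T ! j)} = card {u\<in>set (take i T). w \<in> cnbh V E u}"
    by (rule card_idx) auto
  then show ?thesis unfolding is_dns_def okd_def
    by (smt (verit) less_or_eq_imp_le)
qed

lemma dns_snoc:
  "is_dns V E (T @ [v]) \<longleftrightarrow> is_dns V E T \<and> v \<notin> set T \<and> v \<in> V \<and> okd V E T v"
proof -
  have "(\<forall>i<length (T@[v]). okd V E (take i (T@[v])) ((T@[v])!i)) \<longleftrightarrow>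
        (\<forall>i<length T. okd V E (take i T) (T!i)) \<and> okd V E T v"
    by (auto simp: nth_append less_Suc_eq)
  then show ?thesis unfolding dns_take by auto
qed

lemma dns_split:
  assumes "is_dns V E (xs @ v # ys)"
  shows "okd V E xs v \<and> v \<notin> set xs \<and> v \<in> V \<and> set xs \<subseteq> V"
proof -
  have A: "\<forall>i<length (xs @ v # ys). okd V E (take i (xs @ v # ys)) ((xs @ v # ys) ! i)"
    using assms unfolding dns_take by blast
  have "okd V E (take (length xs) (xs @ v # ys)) ((xs @ v # ys) ! length xs)"
    by (rule A[rule_format]) simp
  then show ?thesis using assms unfolding dns_take by auto
qed

lemma restrict:
  assumes "is_dns V E T"
    and "\<And>xs v ys. T = xs @ v # ys \<Longrightarrow> v \<in> X \<Longrightarrow> okd X (induced E X) (filter (\<lambda>x. x \<in> X) xs) v"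
  shows "is_dns X (induced E X) (filter (\<lambda>x. x \<in> X) T)"
  using assms
proof (induction T rule: rev_induct)
  case Nil
  then show ?case by (simp add: is_dns_def)
next
  case (snoc v T)
  have dT: "is_dns V E T" "v \<notin> set T" using snoc.prems(1) by (simp_all add: dns_snoc)
  have IH: "is_dns X (induced E X) (filter (\<lambda>x. x \<in> X) T)"
    using snoc.IH[OF dT(1)] snoc.prems(2) by fastforce
  show ?case
  proof (cases "v \<in> X")
    case True
    have "okd X (induced E X) (filter (\<lambda>x. x \<in> X) T) v"
      using snoc.prems(2)[of T v "[]"] True by simp
    then show ?thesis using IH True dT(2) by (simp add: dns_snoc)
  next
    case False
    then show ?thesis using IH by simp
  qed
qed

lemma card_le1_sub:
  assumes "A \<subseteq> B" "finite B" "card B \<le> 1"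
  shows "card A \<le> 1"
  using assms card_mono le_trans by blast

lemma transfer_in:
  assumes "X \<subseteq> V" "v \<in> X" "w \<in> X" "w \<in> cnbh V E v"
    "card {u\<in>set xs. w \<in> cnbh V E u} \<le> 1"
  shows "okd X (induced E X) (filter (\<lambda>x. x \<in> X) xs) v"
  unfolding okd_def
proof (rule bexI[of _ w])
  show "w \<in> cnbh X (induced E X) v" using assms by (auto simp: cnbh_def induced_def)
  have "{u\<in>set (filter (\<lambda>x. x \<in> X) xs). w \<in> cnbh X (induced E X) u} \<subseteq> {u\<in>set xs. w \<in> cnbh V E u}"
    using assms(1) by (auto simp: cnbh_def induced_def)
  then show "card {u\<in>set (filter (\<lambda>x. x \<in> X) xs). w \<in> cnbh X (induced E X) u} \<le> 1"
    by (rule card_le1_sub[OF _ _ assms(5)]) simp_all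
qed

lemma dgr_ge:
  assumes "finite X" "is_dns X F T"
  shows "length T \<le> dgr X F"
proof -
  have le: "length T' \<le> card X" if "is_dns X F T'" for T'
  proof -
    have "distinct T'" "set T' \<subseteq> X" using that unfolding is_dns_def by blast+
    then show ?thesis using distinct_card card_mono[OF assms(1)] by metis
  qed
  have "length ` {T. is_dns X F T} \<subseteq> {..card X}"
    using le by blast
  then have "finite (length ` {T. is_dns X F T})" using finite_subset by blast
  then show ?thesis unfolding dgr_def using assms(2) by (simp add: Max_ge)
qed

theorem lemma6:
  fixes V :: "'a set" and E :: "'a \<Rightarrow> 'a \<Rightarrow> bool"
    and r :: nat and s c :: "nat \<Rightarrow> 'a" and H :: "'a set" and T :: "'a list"
  assumes "graph V E"
    and "(thin_spider V E r s c H \<and> r \<ge> 2) \<or> (thick_spider V E r s c H \<and> r \<ge> 3)"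
    and "is_mdns V E T"
  shows "card (set T \<inter> H) \<le> dgr H (induced E H)
       \<and> card (set T \<inter> (c ` {..<r} \<union> s ` {..<r}))
           \<le> dgr (c ` {..<r} \<union> s ` {..<r}) (induced E (c ` {..<r} \<union> s ` {..<r}))"
proof -
  define X where "X = c ` {..<r} \<union> s ` {..<r}"
  have sb: "spider_base V E r s c H"
    using assms(2) unfolding thin_spider_def thick_spider_def by (elim disjE conjE) simp_all
  have r2: "r \<ge> 2" using assms(2) by (elim disjE conjE) simp_all
  have tt: "(\<forall>i<r. \<forall>j<r. E (s i) (c j) \<longleftrightarrow> i = j) \<or> (\<forall>i<r. \<forall>j<r. E (s i) (c j) \<longleftrightarrow> i \<noteq> j)"
    using assms(2) unfolding thin_spider_def thick_spider_def by (elim disjE conjE) simp_all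
  have fin: "finite V" and sym: "\<And>u v. E u v \<Longrightarrow> E v u" and irr: "\<And>v. \<not> E v v"
    and inV: "\<And>u v. E u v \<Longrightarrow> u \<in> V \<and> v \<in> V"
    using assms(1) unfolding graph_def by auto
  have sbu: "inj_on s {..<r} \<and> inj_on c {..<r} \<and> s ` {..<r} \<inter> c ` {..<r} = {} \<and> s ` {..<r} \<inter> H = {} \<and> c ` {..<r} \<inter> H = {} \<and> V = s ` {..<r} \<union> c ` {..<r} \<union> H \<and> (\<forall>i<r. \<forall>j<r. \<not> E (s i) (s j)) \<and> (\<forall>i<r. \<forall>j<r. i \<noteq> j \<longrightarrow> E (c i) (c j)) \<and> (\<forall>i<r. \<forall>h\<in>H. E (c i) h) \<and> (\<forall>i<r. \<forall>h\<in>H. \<not> E (s i) h)"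
    using sb unfolding spider_base_def .
  have injs: "inj_on s {..<r}" using sbu by (elim conjE)
  have injc: "inj_on c {..<r}" using sbu by (elim conjE)
  have dSC: "s ` {..<r} \<inter> c ` {..<r} = {}" using sbu by (elim conjE)
  have dSH: "s ` {..<r} \<inter> H = {}" using sbu by (elim conjE)
  have dCH: "c ` {..<r} \<inter> H = {}" using sbu by (elim conjE)
  have Vd: "V = s ` {..<r} \<union> c ` {..<r} \<union> H" using sbu by (elim conjE)
  have SS: "\<And>i j. i<r \<Longrightarrow> j<r \<Longrightarrow> \<not> E (s i) (s j)" using sbu by blast
  have CC: "\<And>i j. i<r \<Longrightarrow> j<r \<Longrightarrow> i \<noteq> j \<Longrightarrow> E (c i) (c j)" using sbu by blast
  have CH: "\<And>i h. i<r \<Longrightarrow> h\<in>H \<Longrightarrow> E (c i) h" using sbu by blast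
  have SH: "\<And>i h. i<r \<Longrightarrow> h\<in>H \<Longrightarrow> \<not> E (s i) h" using sbu by blast
  have dns: "is_dns V E T" using assms(3) unfolding is_mdns_def by blast
  have HV: "H \<subseteq> V" and XV: "X \<subseteq> V" using Vd X_def by auto
  have finH: "finite H" and finX: "finite X" using HV XV fin finite_subset by auto
  have partH: "okd H (induced E H) (filter (\<lambda>x. x \<in> H) xs) v"
    if hT: "T = xs @ v # ys" and hv: "v \<in> H" for xs v ys
  proof -
    have sp: "okd V E xs v" "v \<notin> set xs" "set xs \<subseteq> V"
      using dns_split[of V E xs v ys] dns hT by auto
    then obtain w where w: "w \<in> cnbh V E v" and cw: "card {u\<in>set xs. w \<in> cnbh V E u} \<le> 1"
      unfolding okd_def by blast
    show ?thesis
    proof (cases "w \<in> H")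
      case True
      then show ?thesis using transfer_in[OF HV hv True w cw] by simp
    next
      case False
      then have "w \<noteq> v" "E v w" "w \<in> V" using w hv by (auto simp: cnbh_def)
      then obtain i where i: "i < r" "w = c i \<or> w = s i" using Vd False by auto
      have wc: "w = c i" using i SH[of i v] sym[of v w] \<open>E v w\<close> hv by auto
      have sub: "{u\<in>set (filter (\<lambda>x. x \<in> H) xs). v \<in> cnbh H (induced E H) u}
          \<subseteq> {u\<in>set xs. w \<in> cnbh V E u}"
      proof
        fix u assume "u \<in> {u\<in>set (filter (\<lambda>x. x \<in> H) xs). v \<in> cnbh H (induced E H) u}"
        then have "u \<in> set xs" "u \<in> H" by auto
        then have "E u w" using CH[OF i(1)] sym wc by blast
        then show "u \<in> {u\<in>set xs. w \<in> cnbh V E u}"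
          using \<open>u \<in> set xs\<close> \<open>w \<in> V\<close> by (auto simp: cnbh_def)
      qed
      have "card {u\<in>set (filter (\<lambda>x. x \<in> H) xs). v \<in> cnbh H (induced E H) u} \<le> 1"
        by (rule card_le1_sub[OF sub _ cw]) simp
      moreover have "v \<in> cnbh H (induced E H) v" by (simp add: cnbh_def)
      ultimately show ?thesis unfolding okd_def by blast
    qed
  qed
  have partX: "okd X (induced E X) (filter (\<lambda>x. x \<in> X) xs) v"
    if hT: "T = xs @ v # ys" and hv: "v \<in> X" for xs v ys
  proof -
    have sp: "okd V E xs v" "v \<notin> set xs" "set xs \<subseteq> V"
      using dns_split[of V E xs v ys] dns hT by auto
    then obtain w where w: "w \<in> cnbh V E v" and cw: "card {u\<in>set xs. w \<in> cnbh V E u} \<le> 1"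
      unfolding okd_def by blast
    show ?thesis
    proof (cases "w \<in> X")
      case True
      then show ?thesis using transfer_in[OF XV hv True w cw] by simp
    next
      case False
      then have "w \<noteq> v" "E v w" "w \<in> V" using w hv by (auto simp: cnbh_def)
      then have wH: "w \<in> H" using Vd False X_def by auto
      obtain i where i: "i < r" "v = c i \<or> v = s i" using hv X_def by auto
      have vc: "v = c i" using i SH[of i w] \<open>E v w\<close> wH by auto
      define D where "D = {u\<in>set xs. u \<in> c ` {..<r}}"
      have Dsub: "D \<subseteq> {u\<in>set xs. w \<in> cnbh V E u}"
        using CH wH \<open>w \<in> V\<close> by (auto simp: D_def cnbh_def)
      have cD: "card D \<le> 1" by (rule card_le1_sub[OF Dsub _ cw]) simp
      have finD: "finite D" unfolding D_def by simp
      have Duniq: "\<And>a b. a \<in> D \<Longrightarrow> b \<in> D \<Longrightarrow> a = b"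
        using cD finD by (metis card_le_Suc0_iff_eq One_nat_def)
      have cinX: "\<And>k. k < r \<Longrightarrow> c k \<in> X" and sinX: "\<And>k. k < r \<Longrightarrow> s k \<in> X"
        unfolding X_def by auto
      obtain j where j: "j < r" "E (c i) (s j)"
        and jsub: "{u\<in>set (filter (\<lambda>x. x \<in> X) xs). s j \<in> cnbh X (induced E X) u} \<subseteq> {s j}"
      proof (cases "\<forall>i<r. \<forall>j<r. E (s i) (c j) \<longleftrightarrow> i = j")
        case thin: True
        have "0 < r" using r2 by simp
        have e: "E (c i) (s i)" using thin i(1) sym by blast
        have "{u\<in>set (filter (\<lambda>x. x \<in> X) xs). s i \<in> cnbh X (induced E X) u} \<subseteq> {s i}"
        proof
          fix u assume u: "u \<in> {u\<in>set (filter (\<lambda>x. x \<in> X) xs). s i \<in> cnbh X (induced E X) u}"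
          show "u \<in> {s i}"
          proof (rule ccontr)
            assume "u \<notin> {s i}"
            then have eu: "E u (s i)" "u \<in> set xs" "u \<in> X" using u by (auto simp: cnbh_def induced_def)
            then obtain k where k: "k < r" "u = c k \<or> u = s k" using X_def by auto
            show False
            proof (cases "u = s k")
              case True then show ?thesis using SS[OF k(1) i(1)] eu by simp
            next
              case False
              then have "u = c k" using k by auto
              then have "k = i" using thin eu(1) sym k(1) i(1) by blast
              then show ?thesis using \<open>u = c k\<close> vc sp(2) eu(2) by simp
            qed
          qed
        qed
        then show ?thesis using that[of i] e i(1) by blast
      next
        case False
        then have thick: "\<forall>i<r. \<forall>j<r. E (s i) (c j) \<longleftrightarrow> i \<noteq> j" using tt by blast
        obtain j where j: "j < r" "j \<noteq> i" "\<forall>u\<in>D. u = c j"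
        proof (cases "D = {}")
          case True
          then show ?thesis using that[of "if i = 0 then 1 else 0"] r2 by auto
        next
          case False
          then obtain d where "d \<in> D" by blast
          then obtain m where m: "m < r" "d = c m" "c m \<in> set xs" unfolding D_def by auto
          have "m \<noteq> i" using m vc sp(2) by auto
          then show ?thesis using that[of m] m Duniq \<open>d \<in> D\<close> by blast
        qed
        have e: "E (c i) (s j)" using thick i(1) j sym by blast
        have "{u\<in>set (filter (\<lambda>x. x \<in> X) xs). s j \<in> cnbh X (induced E X) u} \<subseteq> {s j}"
        proof
          fix u assume u: "u \<in> {u\<in>set (filter (\<lambda>x. x \<in> X) xs). s j \<in> cnbh X (induced E X) u}"
          show "u \<in> {s j}"
          proof (rule ccontr)
            assume "u \<notin> {s j}"
            then have eu: "E u (s j)" "u \<in> set xs" "u \<in> X" using u by (auto simp: cnbh_def induced_def)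
            then obtain k where k: "k < r" "u = c k \<or> u = s k" using X_def by auto
            show False
            proof (cases "u = s k")
              case True then show ?thesis using SS[OF k(1) j(1)] eu by simp
            next
              case False
              then have "u = c k" using k by auto
              then have "k \<noteq> j" using thick eu(1) sym k(1) j(1) by blast
              moreover have "u \<in> D" using \<open>u = c k\<close> eu(2) k(1) D_def by auto
              then have "c k = c j" using j(3) \<open>u = c k\<close> by simp
              then have "k = j" using injc k(1) j(1) by (meson inj_on_def lessThan_iff)
              ultimately show ?thesis by simp
            qed
          qed
        qed
        then show ?thesis using that[of j] e j(1) by blast
      qed
      have "card {u\<in>set (filter (\<lambda>x. x \<in> X) xs). s j \<in> cnbh X (induced E X) u} \<le> 1"
        using card_mono[OF _ jsub] by simp
      moreover have "s j \<in> cnbh X (induced E X) v"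
        using j(2) vc cinX[OF i(1)] sinX[OF j(1)] by (simp add: cnbh_def induced_def)
      ultimately show ?thesis unfolding okd_def by blast
    qed
  qed
  have RH: "is_dns H (induced E H) (filter (\<lambda>x. x \<in> H) T)"
    by (rule restrict[OF dns]) (rule partH)
  have RX: "is_dns X (induced E X) (filter (\<lambda>x. x \<in> X) T)"
    by (rule restrict[OF dns]) (rule partX)
  have dT: "distinct T" using dns unfolding is_dns_def by blast
  have cardf: "card (set T \<inter> P) = length (filter (\<lambda>x. x \<in> P) T)" for P
  proof -
    have "set (filter (\<lambda>x. x \<in> P) T) = set T \<inter> P" by auto
    then show ?thesis using distinct_card[OF distinct_filter[OF dT]] by metis
  qed
  have 1: "card (set T \<inter> H) \<le> dgr H (induced E H)"
    unfolding cardf by (rule dgr_ge[OF finH RH])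
  have 2: "card (set T \<inter> X) \<le> dgr X (induced E X)"
    unfolding cardf by (rule dgr_ge[OF finX RX])
  show ?thesis using 1 2 unfolding X_def by blast
qed

end
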